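(* Let $\langle S,L,\tau,\ell\rangle$ be a labelled Markov chain. For every robust bisimulation $R\subseteq S\times S$ we have $R\subseteq\,\simeq$. (Together with the fact that $\simeq$ is a robust bisimulation, $\simeq$ is the greatest robust bisimulation.)
   Context: Labelled Markov chain $\langle S,L,\tau,\ell\rangle$: finite $S$, finite $L$, $\tau:S\to\mathcal{D}(S)$, $\ell:S\to L$, $|\ell(S)|\ge 2$. $\Omega(\mu,\nu)$ = couplings (distributions on $S\times S$ with marginals $\mu,\nu$). A (probabilistic) bisimulation is an equivalence relation $R\subseteq S\times S$ such that for all $(s,t)\in R$, $\ell(s)=\ell(t)$ and some $\omega\in\Omega(\tau(s),\tau(t))$ has $\mathrm{support}(\omega)\subseteq R$. $S^2_\Delta=\{(s,s)\}$, $S^2_1=\{(s,t)\mid\ell(s)\ne\ell(t)\}$. A policy is $P:S\times S\to\mathcal{D}(S\times S)$ with $P(s,t)\in\Omega(\tau(s),\tau(t))$ for $(s,t)\notin S^2_1$ and $P(s,t)$ the point mass at $(s,t)$ for $(s,t)\in S^2_1$; $\mathcal{P}$ is the set of policies; $P$ induces the Markov chain $\langle S\times S,P\rangle$. Robust bisimilarity: $s\simeq t$ iff some $P\in\mathcal{P}$ makes $(s,t)$ reach $S^2_\Delta$ with probability $1$ in $\langle S\times S,P\rangle$. For a policy $P$, a set $R$ supports a path $(u_1,v_1)\dots(u_n,v_n)$ of $\langle S\times S,P\rangle$ if $(u_i,v_i)\in R$ and $\mathrm{support}(P(u_i,v_i))\subseteq R$ for all $i$. A robust bisimulation is a bisimulation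 $R$ such that for every $(s,t)\in R$ there is $P\in\mathcal{P}$ such that $R$ supports a path from $(s,t)$ to $S^2_\Delta$ in $\langle S\times S,P\rangle$. *)

theory Defs
  imports "HOL-Probability.Probability"
begin

text \<open>Labelled Markov chain: state type 's (finite), label type 'l (finite),
  transition function tau :: 's => 's pmf, labelling ell :: 's => 'l.\<close>

definition couplings :: "'s pmf \<Rightarrow> 't pmf \<Rightarrow> ('s \<times> 't) pmf set" where
  "couplings \<mu> \<nu> = {\<omega>. map_pmf fst \<omega> = \<mu> \<and> map_pmf snd \<omega> = \<nu>}"

definition diag_pairs :: "('s \<times> 's) set" where
  "diag_pairs = {(s, s) | s. True}"

definition diff_label_pairs :: "('s \<Rightarrow> 'l) \<Rightarrow> ('s \<times> 's) set" where
  "diff_label_pairs lbl = {(s, t). lbl s \<noteq> lbl t}"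

definition is_bisimulation ::
  "('s \<Rightarrow> 's pmf) \<Rightarrow> ('s \<Rightarrow> 'l) \<Rightarrow> ('s \<times> 's) set \<Rightarrow> bool" where
  "is_bisimulation \<tau> lbl R \<longleftrightarrow> equiv UNIV R \<and>
     (\<forall>(s, t) \<in> R. lbl s = lbl t \<and>
        (\<exists>\<omega> \<in> couplings (\<tau> s) (\<tau> t). set_pmf \<omega> \<subseteq> R))"

definition policies ::
  "('s \<Rightarrow> 's pmf) \<Rightarrow> ('s \<Rightarrow> 'l) \<Rightarrow> ('s \<times> 's \<Rightarrow> ('s \<times> 's) pmf) set" where
  "policies \<tau> lbl = {P. \<forall>s t.
      ((s, t) \<notin> diff_label_pairs lbl \<longrightarrow> P (s, t) \<in> couplings (\<tau> s) (\<tau> t)) \<and>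
      ((s, t) \<in> diff_label_pairs lbl \<longrightarrow> P (s, t) = return_pmf (s, t))}"

fun reach_within :: "('a \<Rightarrow> 'a pmf) \<Rightarrow> 'a set \<Rightarrow> nat \<Rightarrow> 'a \<Rightarrow> real" where
  "reach_within P T 0 x = (if x \<in> T then 1 else 0)"
| "reach_within P T (Suc n) x =
     (if x \<in> T then 1 else measure_pmf.expectation (P x) (reach_within P T n))"

definition reach_prob :: "('a \<Rightarrow> 'a pmf) \<Rightarrow> 'a set \<Rightarrow> 'a \<Rightarrow> real" where
  "reach_prob P T x = (SUP n. reach_within P T n x)"

definition robustly_bisimilar ::
  "('s \<Rightarrow> 's pmf) \<Rightarrow> ('s \<Rightarrow> 'l) \<Rightarrow> 's \<Rightarrow> 's \<Rightarrow> bool" where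
  "robustly_bisimilar \<tau> lbl s t \<longleftrightarrow>
     (\<exists>P \<in> policies \<tau> lbl. reach_prob P diag_pairs (s, t) = 1)"

definition is_path :: "('a \<Rightarrow> 'a pmf) \<Rightarrow> 'a list \<Rightarrow> bool" where
  "is_path P xs \<longleftrightarrow> xs \<noteq> [] \<and>
     (\<forall>i. Suc i < length xs \<longrightarrow> xs ! Suc i \<in> set_pmf (P (xs ! i)))"

definition supports_path :: "('a \<Rightarrow> 'a pmf) \<Rightarrow> 'a set \<Rightarrow> 'a list \<Rightarrow> bool" where
  "supports_path P R xs \<longleftrightarrow> (\<forall>x \<in> set xs. x \<in> R \<and> set_pmf (P x) \<subseteq> R)"

definition is_robust_bisimulation ::
  "('s \<Rightarrow> 's pmf) \<Rightarrow> ('s \<Rightarrow> 'l) \<Rightarrow> ('s \<times> 's) set \<Rightarrow> bool" where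
  "is_robust_bisimulation \<tau> lbl R \<longleftrightarrow> is_bisimulation \<tau> lbl R \<and>
     (\<forall>(s, t) \<in> R. \<exists>P \<in> policies \<tau> lbl. \<exists>xs.
        is_path P xs \<and> hd xs = (s, t) \<and> last xs \<in> diag_pairs \<and> supports_path P R xs)"

end

theory Submission
  imports Defs
begin

lemma exp_sum: "measure_pmf.expectation (p::'a::finite pmf) f = (\<Sum>y\<in>UNIV. f y * pmf p y)"
  by (rule integral_measure_pmf_real) auto

lemma rw_bounds:
  fixes P :: "'a::finite \<Rightarrow> 'a pmf"
  shows "0 \<le> reach_within P T n x \<and> reach_within P T n x \<le> 1"
proof (induction n arbitrary: x)
  case 0 then show ?case by simp
next
  case (Suc n)
  have "(\<Sum>y\<in>UNIV. reach_within P T n y * pmf (P x) y) \<le> (\<Sum>y\<in>UNIV. pmf (P x) y)"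
    by (rule sum_mono) (use Suc in \<open>auto intro: mult_left_le_one_le\<close>)
  also have "\<dots> = 1" by (rule sum_pmf_eq_1) auto
  finally have "(\<Sum>y\<in>UNIV. reach_within P T n y * pmf (P x) y) \<le> 1" .
  moreover have "0 \<le> (\<Sum>y\<in>UNIV. reach_within P T n y * pmf (P x) y)"
    by (rule sum_nonneg) (use Suc in auto)
  ultimately show ?case by (simp add: exp_sum)
qed

lemma rw_mono:
  fixes P :: "'a::finite \<Rightarrow> 'a pmf"
  shows "reach_within P T n x \<le> reach_within P T (Suc n) x"
proof (induction n arbitrary: x)
  case 0
  show ?case using rw_bounds[of P T 0] by (auto simp: exp_sum intro!: sum_nonneg)
next
  case (Suc n)
  have "(\<Sum>y\<in>UNIV. reach_within P T n y * pmf (P x) y) \<le> (\<Sum>y\<in>UNIV. reach_within P T (Suc n) y * pmf (P x) y)"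
    by (rule sum_mono, rule mult_right_mono[OF Suc.IH pmf_nonneg])
  then show ?case by (simp only: reach_within.simps exp_sum) auto
qed

lemma rp_limit:
  fixes P :: "'a::finite \<Rightarrow> 'a pmf"
  shows "(\<lambda>n. reach_within P T n x) \<longlonglongrightarrow> reach_prob P T x"
  unfolding reach_prob_def
proof (rule LIMSEQ_incseq_SUP)
  show "bdd_above (range (\<lambda>n. reach_within P T n x))"
    by (auto simp: bdd_above_def intro: rw_bounds[THEN conjunct2])
  show "incseq (\<lambda>n. reach_within P T n x)"
    by (rule incseq_SucI) (rule rw_mono)
qed

lemma rp_le1:
  fixes P :: "'a::finite \<Rightarrow> 'a pmf"
  shows "reach_prob P T x \<le> 1"
  unfolding reach_prob_def by (rule cSUP_least) (auto intro: rw_bounds[THEN conjunct2])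

lemma rp_T:
  fixes P :: "'a::finite \<Rightarrow> 'a pmf"
  shows "x \<in> T \<Longrightarrow> reach_prob P T x = 1"
proof -
  assume "x \<in> T"
  then have "reach_within P T n x = 1" for n by (cases n) auto
  then show ?thesis unfolding reach_prob_def by simp
qed

lemma rp_fix:
  fixes P :: "'a::finite \<Rightarrow> 'a pmf"
  assumes "x \<notin> T"
  shows "reach_prob P T x = (\<Sum>y\<in>UNIV. reach_prob P T y * pmf (P x) y)"
proof -
  have "(\<lambda>n. reach_within P T (Suc n) x) \<longlonglongrightarrow> reach_prob P T x"
    using rp_limit LIMSEQ_Suc by blast
  moreover have "(\<lambda>n. reach_within P T (Suc n) x) = (\<lambda>n. \<Sum>y\<in>UNIV. reach_within P T n y * pmf (P x) y)"
    using assms by (simp add: exp_sum)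
  moreover have "(\<lambda>n. \<Sum>y\<in>UNIV. reach_within P T n y * pmf (P x) y) \<longlonglongrightarrow> (\<Sum>y\<in>UNIV. reach_prob P T y * pmf (P x) y)"
    by (intro tendsto_sum tendsto_mult_right rp_limit)
  ultimately show ?thesis using LIMSEQ_unique by metis
qed

theorem proposition4:
  fixes \<tau> :: "'s::finite \<Rightarrow> 's pmf" and lbl :: "'s \<Rightarrow> 'l::finite"
    and R :: "('s \<times> 's) set"
  assumes "card (range lbl) \<ge> 2"
    and "is_robust_bisimulation \<tau> lbl R"
  shows "R \<subseteq> {(s, t). robustly_bisimilar \<tau> lbl s t}"
proof (cases "R = {}")
  case True then show ?thesis by simp
next
  case False
  then obtain x1 where x1: "x1 \<in> R" by blast
  have rob: "\<forall>(s, t) \<in> R. \<exists>P \<in> policies \<tau> lbl. \<exists>xs.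
        is_path P xs \<and> hd xs = (s, t) \<and> last xs \<in> diag_pairs \<and> supports_path P R xs"
    using assms(2) unfolding is_robust_bisimulation_def by blast
  define G where "G x n \<longleftrightarrow> (\<exists>Q xs. Q \<in> policies \<tau> lbl \<and> is_path Q xs \<and> hd xs = x \<and>
      last xs \<in> diag_pairs \<and> supports_path Q R xs \<and> length xs = n)" for x n
  define rk where "rk x = (LEAST n. G x n)" for x
  have Gex: "\<exists>n. G x n" if "x \<in> R" for x
    using rob that unfolding G_def by fastforce
  have Grk: "G x (rk x)" if "x \<in> R" for x
    unfolding rk_def using Gex[OF that] by (rule LeastI_ex)
  have rk_le: "rk x \<le> n" if "G x n" for x n
    unfolding rk_def using that by (rule Least_le)
  define W where "W x = (SOME Q. \<exists>xs. Q \<in> policies \<tau> lbl \<and> is_path Q xs \<and> hd xs = x \<and>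
      last xs \<in> diag_pairs \<and> supports_path Q R xs \<and> length xs = rk x)" for x
  have W: "\<exists>xs. W x \<in> policies \<tau> lbl \<and> is_path (W x) xs \<and> hd xs = x \<and>
      last xs \<in> diag_pairs \<and> supports_path (W x) R xs \<and> length xs = rk x" if "x \<in> R" for x
  proof -
    have "\<exists>Q xs. Q \<in> policies \<tau> lbl \<and> is_path Q xs \<and> hd xs = x \<and>
      last xs \<in> diag_pairs \<and> supports_path Q R xs \<and> length xs = rk x"
      using Grk[OF that] unfolding G_def .
    then show ?thesis unfolding W_def by (rule someI_ex[where P = "\<lambda>Q. \<exists>xs. _ Q xs"]) 
  qed
  define P0 where "P0 = W x1"
  have P0: "P0 \<in> policies \<tau> lbl" using W[OF x1] unfolding P0_def by blast
  define P where "P x = (if x \<in> R \<and> x \<notin> diag_pairs then W x x else P0 x)" for x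
  have Pex: "\<exists>Q \<in> policies \<tau> lbl. P x = Q x" for x
  proof (cases "x \<in> R \<and> x \<notin> diag_pairs")
    case True then show ?thesis using W[of x] unfolding P_def by auto
  next
    case False then show ?thesis using P0 unfolding P_def by auto
  qed
  have Ppol: "P \<in> policies \<tau> lbl"
    unfolding policies_def mem_Collect_eq
  proof (intro allI)
    fix s t
    obtain Q where Q: "Q \<in> policies \<tau> lbl" "P (s, t) = Q (s, t)" using Pex by blast
    show "((s, t) \<notin> diff_label_pairs lbl \<longrightarrow> P (s, t) \<in> couplings (\<tau> s) (\<tau> t)) \<and>
      ((s, t) \<in> diff_label_pairs lbl \<longrightarrow> P (s, t) = return_pmf (s, t))"
      using Q unfolding policies_def by auto
  qed
  have key: "set_pmf (P x) \<subseteq> R \<and> (\<exists>y \<in> set_pmf (P x). rk y < rk x)"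
    if xR: "x \<in> R" and xd: "x \<notin> diag_pairs" for x
  proof -
    have Px: "P x = W x x" using xR xd unfolding P_def by simp
    obtain xs where xs: "W x \<in> policies \<tau> lbl" "is_path (W x) xs" "hd xs = x"
      "last xs \<in> diag_pairs" "supports_path (W x) R xs" "length xs = rk x"
      using W[OF xR] by blast
    have ne: "xs \<noteq> []" using xs(2) unfolding is_path_def by simp
    have l1: "length xs \<noteq> 1"
    proof
      assume "length xs = 1"
      then obtain a where "xs = [a]" by (cases xs) auto
      then show False using xs(3,4) xd by simp
    qed
    then have l2: "Suc 0 < length xs" using ne by (cases xs) auto
    have x0: "xs ! 0 = x" using xs(3) ne by (simp add: hd_conv_nth)
    have y: "xs ! Suc 0 \<in> set_pmf (W x x)"
      using xs(2) l2 x0 unfolding is_path_def by metis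
    have xin: "x \<in> set xs" using xs(3) ne by auto
    have sub: "set_pmf (W x x) \<subseteq> R" using xs(5) xin unfolding supports_path_def by blast
    have "G (xs ! Suc 0) (length (tl xs))"
      unfolding G_def
    proof (intro exI conjI)
      show "W x \<in> policies \<tau> lbl" by (rule xs(1))
      show "is_path (W x) (tl xs)" using xs(2) l2 unfolding is_path_def
        by (cases xs) (auto simp: nth_tl hd_conv_nth)
      show "hd (tl xs) = xs ! Suc 0" using l2 by (cases xs) (auto simp: hd_conv_nth)
      show "last (tl xs) \<in> diag_pairs" using xs(4) l2 by (cases xs) auto
      show "supports_path (W x) R (tl xs)" using xs(5) unfolding supports_path_def
        by (meson list.set_sel(2) ne)
    qed simp
    then have "rk (xs ! Suc 0) < rk x" using rk_le xs(6) l2 by fastforce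
    then show ?thesis using Px sub y by auto
  qed
  define h where "h = reach_prob P diag_pairs"
  define c where "c = Min (h ` R)"
  have finR: "finite R" by simp
  have cle: "c \<le> h z" if "z \<in> R" for z unfolding c_def using finR that by simp
  have "c \<in> h ` R" unfolding c_def using finR False by (intro Min_in) auto
  then obtain xa where xa: "xa \<in> R \<and> h xa = c" by auto
  obtain x0 where x0: "x0 \<in> R \<and> h x0 = c" and x0min: "\<forall>y. y \<in> R \<and> h y = c \<longrightarrow> rk x0 \<le> rk y"
    using ex_has_least_nat[where P = "\<lambda>y. y \<in> R \<and> h y = c" and m = rk, OF xa] by blast
  have "x0 \<in> diag_pairs"
  proof (rule ccontr)
    assume nd: "x0 \<notin> diag_pairs"
    obtain y where sub: "set_pmf (P x0) \<subseteq> R" and y: "y \<in> set_pmf (P x0)" "rk y < rk x0"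
      using key[OF conjunct1[OF x0] nd] by blast
    have hx0: "h x0 = (\<Sum>z\<in>UNIV. h z * pmf (P x0) z)"
      unfolding h_def by (rule rp_fix[OF nd])
    have "(\<Sum>z\<in>UNIV. (h z - c) * pmf (P x0) z) = (\<Sum>z\<in>UNIV. h z * pmf (P x0) z) - c * (\<Sum>z\<in>UNIV. pmf (P x0) z)"
      by (simp add: left_diff_distrib sum_subtractf sum_distrib_left)
    also have "(\<Sum>z\<in>UNIV. pmf (P x0) z) = 1" by (rule sum_pmf_eq_1) auto
    finally have s0: "(\<Sum>z\<in>UNIV. (h z - c) * pmf (P x0) z) = 0" using hx0 x0 by simp
    have nn: "\<forall>z\<in>UNIV. 0 \<le> (h z - c) * pmf (P x0) z"
    proof
      fix z
      show "0 \<le> (h z - c) * pmf (P x0) z"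
      proof (cases "z \<in> set_pmf (P x0)")
        case True then have "c \<le> h z" using sub cle by blast
        then show ?thesis by simp
      next
        case False then show ?thesis by (simp add: set_pmf_iff)
      qed
    qed
    have "(h y - c) * pmf (P x0) y = 0"
    proof -
      have "\<forall>z\<in>UNIV. (h z - c) * pmf (P x0) z = 0"
        using s0 nn by (subst (asm) sum_nonneg_eq_0_iff) auto
      then show ?thesis by blast
    qed
    moreover have "pmf (P x0) y \<noteq> 0" using y(1) by (simp add: set_pmf_iff)
    ultimately have "h y = c" by simp
    then have "rk x0 \<le> rk y" using x0min sub y(1) by blast
    then show False using y(2) by simp
  qed
  then have c1: "c = 1" using x0 unfolding h_def by (simp add: rp_T)
  show ?thesis
  proof
    fix st assume st: "st \<in> R"
    obtain s t where st_eq: "st = (s, t)" by (cases st)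
    have "h st = 1" using cle[OF st] c1 rp_le1[of P diag_pairs st] unfolding h_def by simp
    then show "st \<in> {(s, t). robustly_bisimilar \<tau> lbl s t}"
      using Ppol unfolding st_eq robustly_bisimilar_def h_def by auto
  qed
qed

end
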